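(* Let $k\ge 4$ be even and $n$ odd with $2k\le n$ and $n\equiv\pm 2\pmod{k-1}$. Then $$\chi_c(\mathrm{Pet}(n,k))\ \le\ \frac{2n(k-1)}{(n-4)(k-2)}.$$
   Context: For integers $n,k$ with $2<2k\le n$, the generalized Petersen graph $\mathrm{Pet}(n,k)$ has vertex set $\{u_0,\dots,u_{n-1}\}\cup\{v_0,\dots,v_{n-1}\}$ and edge set $\{u_iu_{i+1}\}\cup\{u_iv_i\}\cup\{v_iv_{i+k}\}$, indices modulo $n$. For integers $p\ge 2q\ge 2$, the circular complete graph $K_{p/q}$ has vertex set $\{0,\dots,p-1\}$ with $i\sim j$ iff $q\le|i-j|\le p-q$; the circular chromatic number $\chi_c(G)$ is the minimum of $p/q$ over all such $p,q$ for which $G$ admits a homomorphism to $K_{p/q}$. *)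

theory Defs
  imports Complex_Main "HOL-Number_Theory.Cong"
begin

text \<open>Vertices of the generalized Petersen graph: outer u_i and inner v_i.\<close>
datatype pvert = U nat | V nat

definition pet_verts :: "nat \<Rightarrow> pvert set" where
  "pet_verts n = {U i | i. i < n} \<union> {V i | i. i < n}"

definition pet_arc :: "nat \<Rightarrow> nat \<Rightarrow> pvert \<Rightarrow> pvert \<Rightarrow> bool" where
  "pet_arc n k a b \<longleftrightarrow> (\<exists>i<n. (a = U i \<and> b = U ((i + 1) mod n))
                              \<or> (a = U i \<and> b = V i)
                              \<or> (a = V i \<and> b = V ((i + k) mod n)))"

definition pet_adj :: "nat \<Rightarrow> nat \<Rightarrow> pvert \<Rightarrow> pvert \<Rightarrow> bool" where
  "pet_adj n k a b \<longleftrightarrow> pet_arc n k a b \<or> pet_arc n k b a"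

definition circ_adj :: "nat \<Rightarrow> nat \<Rightarrow> nat \<Rightarrow> nat \<Rightarrow> bool" where
  "circ_adj p q i j \<longleftrightarrow> i < p \<and> j < p \<and>
     int q \<le> \<bar>int i - int j\<bar> \<and> \<bar>int i - int j\<bar> \<le> int p - int q"

definition circ_hom :: "'a set \<Rightarrow> ('a \<Rightarrow> 'a \<Rightarrow> bool) \<Rightarrow> nat \<Rightarrow> nat \<Rightarrow> ('a \<Rightarrow> nat) \<Rightarrow> bool" where
  "circ_hom Vs E p q f \<longleftrightarrow> (\<forall>x\<in>Vs. f x < p) \<and>
     (\<forall>x\<in>Vs. \<forall>y\<in>Vs. E x y \<longrightarrow> circ_adj p q (f x) (f y))"

text \<open>Circular chromatic number: the least p/q (p >= 2q >= 2) admitting a homomorphism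
  to K_{p/q} (taken as an infimum; for finite loopless graphs it is attained).\<close>
definition circ_chrom :: "'a set \<Rightarrow> ('a \<Rightarrow> 'a \<Rightarrow> bool) \<Rightarrow> real" where
  "circ_chrom Vs E = Inf {real p / real q | p q. 2 * q \<le> p \<and> 1 \<le> q \<and> (\<exists>f. circ_hom Vs E p q f)}"

end

theory Submission
  imports Defs
begin

lemma adj_mod:
  fixes a b n q :: nat and d :: int
  assumes n: "n > 0" and c: "(int a - int b) mod int n = d mod int n"
    and q1: "int q \<le> d" and q2: "d \<le> int n - int q" and q0: "q \<ge> 1"
  shows "circ_adj n q (a mod n) (b mod n)"
proof -
  have "(int (a mod n) - int (b mod n)) mod int n = d mod int n"
    using c by (simp add: zmod_int mod_diff_eq)
  hence "(int (a mod n) - int (b mod n)) mod int n = d"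
    using q1 q2 q0 by (simp add: mod_pos_pos_trivial)
  then obtain j where j: "int (a mod n) - int (b mod n) = d + int n * j"
    by (metis mod_div_mult_eq add.commute mult.commute)
  have x: "a mod n < n" "b mod n < n" using n by auto
  have "j = 0 \<or> j = -1"
  proof -
    have "int n * j < int n" using j x q1 q2 by linarith
    hence "j < 1" using n by (simp add: mult_less_cancel_left1)
    moreover have "int n * j > - 2 * int n" using j x q1 q2 by linarith
    hence "j > -2" using n
      by (metis mult.commute mult_less_cancel_left_pos of_nat_0_less_iff)
    ultimately show ?thesis by linarith
  qed
  thus ?thesis unfolding circ_adj_def using j x q1 q2 by auto
qed

lemma adj_mod2:
  fixes a b n q :: nat and d :: int
  assumes n: "n > 0" and c: "(int a - int b) mod int n = d mod int n
      \<or> (int b - int a) mod int n = d mod int n"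
    and q1: "int q \<le> d" and q2: "d \<le> int n - int q" and q0: "q \<ge> 1"
  shows "circ_adj n q (a mod n) (b mod n)"
  using c
proof
  assume "(int a - int b) mod int n = d mod int n"
  thus ?thesis using adj_mod[OF n _ q1 q2 q0] by blast
next
  assume h: "(int b - int a) mod int n = d mod int n"
  have "(int a - int b) mod int n = (int n - d) mod int n"
  proof -
    have "(int a - int b) mod int n = (- (int b - int a)) mod int n" by simp
    also have "\<dots> = (- d) mod int n" using h by (metis mod_minus_eq)
    also have "\<dots> = (int n - d) mod int n" by (simp add: mod_diff_left_eq[symmetric])
    finally show ?thesis .
  qed
  thus ?thesis using adj_mod[OF n _ _ _ q0, of a b "int n - d"] q1 q2 by auto
qed

lemma circ_adj_sym: "circ_adj p q i j \<Longrightarrow> circ_adj p q j i"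
  unfolding circ_adj_def by (simp add: abs_minus_commute)

lemma shift_mod:
  fixes i s m n :: nat
  assumes "n > 0"
  shows "(int (((i + s) mod n) * m) - int (i * m)) mod int n = int (s * m) mod int n"
proof -
  have "int (((i + s) mod n) * m) = ((int i + int s) mod int n) * int m"
    by (simp add: zmod_int)
  hence "(int (((i + s) mod n) * m) - int (i * m)) mod int n
      = (((int i + int s) mod int n) * int m - int i * int m) mod int n" by (simp only: of_nat_mult)
  also have "\<dots> = ((int i + int s) * int m - int i * int m) mod int n"
    by (metis mod_diff_left_eq mod_mult_left_eq)
  also have "\<dots> = int (s * m) mod int n" by (simp add: algebra_simps)
  finally show ?thesis .
qed

lemma shift_mod2:
  fixes i s m n c :: nat
  assumes "n > 0"
  shows "(int (((i + s) mod n) * m + c) - int (i * m + c)) mod int n = int (s * m) mod int n"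
  using shift_mod[OF assms, of i s m] by simp

lemma pet_hom:
  fixes n k q m :: nat and m2 :: int
  assumes n: "n > 0" and q0: "q \<ge> 1" and qn: "2 * q + 1 \<le> n"
    and m1: "q \<le> m" and m2: "int m \<le> int n - int q"
    and m3: "int q \<le> m2" and m4: "m2 \<le> int n - int q"
    and km: "int (k * m) mod int n = m2 mod int n"
  shows "circ_hom (pet_verts n) (pet_adj n k) n q
     (\<lambda>x. case x of U i \<Rightarrow> (i * m) mod n | V i \<Rightarrow> (i * m + (n - 1) div 2) mod n)"
    (is "circ_hom _ _ _ _ ?f")
proof -
  define c where "c = (n - 1) div 2"
  have c1: "q \<le> c" and c2: "c \<le> n - q" using qn unfolding c_def by auto
  have arc: "circ_adj n q (?f x) (?f y)" if "pet_arc n k x y" for x y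
  proof -
    from that obtain i where i: "i < n" and
      cs: "(x = U i \<and> y = U ((i + 1) mod n)) \<or> (x = U i \<and> y = V i)
            \<or> (x = V i \<and> y = V ((i + k) mod n))"
      unfolding pet_arc_def by blast
    from cs show ?thesis
    proof (elim disjE conjE)
      assume "x = U i" "y = U ((i + 1) mod n)"
      thus ?thesis using adj_mod2[OF n _ _ _ q0, of "i*m" "((i + 1) mod n) * m" "int m"]
          shift_mod[OF n, of i 1 m] m1 m2 by simp
    next
      assume "x = U i" "y = V i"
      have "(int (i * m + c) - int (i * m)) mod int n = int c mod int n" by simp
      thus ?thesis using adj_mod2[OF n _ _ _ q0, of "i*m" "i * m + c" "int c"]
          c1 c2 \<open>x = U i\<close> \<open>y = V i\<close> qn unfolding c_def by auto
    next
      assume "x = V i" "y = V ((i + k) mod n)"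
      thus ?thesis using adj_mod2[OF n _ _ _ q0, of "i*m + c" "((i + k) mod n) * m + c" m2]
          shift_mod2[OF n, of i k m c] km m3 m4 unfolding c_def by simp
    qed
  qed
  show ?thesis unfolding circ_hom_def
  proof (intro conjI ballI impI)
    fix x assume "x \<in> pet_verts n"
    show "?f x < n" using n by (cases x) auto
  next
    fix x y assume "x \<in> pet_verts n" "y \<in> pet_verts n" "pet_adj n k x y"
    thus "circ_adj n q (?f x) (?f y)" unfolding pet_adj_def
      using arc circ_adj_sym by blast
  qed
qed

lemma key:
  fixes N K E :: int
  assumes K: "K \<ge> 4" and ev: "even K" and N: "N \<ge> 2 * K" and E: "E = 1 \<or> E = -1"
    and dv: "(K - 1) dvd (N - 2 * E)"
  shows "\<exists>M Q. (K - 1) * M = N * ((K - 2) div 2) + E \<and> Q \<ge> 1 \<and> 2 * Q + 1 \<le> N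
     \<and> Q \<le> M \<and> M \<le> N - Q \<and> Q \<le> M + E \<and> M + E \<le> N - Q
     \<and> (N - 4) * (K - 2) \<le> 2 * (K - 1) * Q"
proof -
  define H where "H = (K - 2) div 2"
  have H: "2 * H = K - 2" using ev unfolding H_def by auto
  have KH2: "K = 2 * H + 2" using H by simp
  from dv obtain t where t: "N - 2 * E = (K - 1) * t" by blast
  define M where "M = t * H + E"
  have eqM: "(K - 1) * M = N * H + E"
  proof -
    have "(K - 1) * M = ((K - 1) * t) * H + (K - 1) * E" unfolding M_def
      by (simp add: algebra_simps)
    also have "\<dots> = (N - 2 * E) * H + (K - 1) * E" using t by simp
    also have "\<dots> = N * H - E * (2 * H) + (K - 1) * E" by (simp add: algebra_simps)
    also have "\<dots> = N * H + E" by (simp add: KH2 algebra_simps)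
    finally show ?thesis .
  qed
  have H1: "H \<ge> 1" using H K by linarith
  have NH: "N * H \<ge> 2 * K * H" using N H1 by (simp add: mult_right_mono)
  have KH: "2 * K * H \<ge> 2 * K" using H1 K by simp
  have M2: "M \<ge> 2"
  proof -
    have "(K - 1) * (M - 2) \<ge> 0" using eqM NH KH E
      by (simp add: algebra_simps) linarith
    thus ?thesis using K by (simp add: zero_le_mult_iff)
  qed
  have eq2: "(K - 1) * (N - 2 * M - E) = N - (K + 1) * E"
  proof -
    have "(K - 1) * (N - 2 * M - E) = (K - 1) * N - 2 * ((K - 1) * M) - (K - 1) * E"
      by (simp add: algebra_simps)
    also have "\<dots> = (K - 1) * N - N * (2 * H) - 2 * E - (K - 1) * E"
      using eqM by (simp add: algebra_simps)
    also have "\<dots> = N - (K + 1) * E" by (simp add: KH2 algebra_simps)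
    finally show ?thesis .
  qed
  have "N - (K + 1) * E \<ge> 0" using E N K by auto
  hence "(K - 1) * (N - 2 * M - E) \<ge> 0" using eq2 by simp
  hence "N - 2 * M - E \<ge> 0" using K by (simp add: zero_le_mult_iff)
  hence B: "2 * M + E \<le> N" by simp
  have eq3: "2 * (K - 1) * M = N * (K - 2) + 2 * E"
  proof -
    have "2 * (K - 1) * M = 2 * ((K - 1) * M)" by simp
    also have "\<dots> = N * (K - 2) + 2 * E" using eqM by (simp add: KH2 algebra_simps)
    finally show ?thesis .
  qed
  show ?thesis
  proof (cases "E = 1")
    case True
    have "(N - 4) * (K - 2) = N * (K - 2) - 4 * K + 8" by (simp add: algebra_simps)
    hence "(N - 4) * (K - 2) \<le> 2 * (K - 1) * M" using eq3 True K by linarith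
    thus ?thesis
      apply -
      apply (rule exI[of _ M], rule exI[of _ M])
      using True eqM M2 B unfolding H_def[symmetric]
      by simp
  next
    case False
    hence E1: "E = -1" using E by auto
    have "(N - 4) * (K - 2) = N * (K - 2) - 4 * K + 8" by (simp add: algebra_simps)
    moreover have "2 * (K - 1) * (M - 1) = N * (K - 2) - 2 * K"
      using eq3 E1 by (simp add: algebra_simps)
    ultimately have "(N - 4) * (K - 2) \<le> 2 * (K - 1) * (M - 1)" using K by linarith
    thus ?thesis
      apply -
      apply (rule exI[of _ M], rule exI[of _ "M - 1"])
      using E1 eqM M2 B unfolding H_def[symmetric]
      by simp
  qed
qed

theorem corollary6:
  fixes n k :: nat
  assumes "k \<ge> 4" and "even k" and "odd n" and "2 * k \<le> n"
    and "[int n = 2] (mod int (k - 1)) \<or> [int n = - 2] (mod int (k - 1))"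
  shows "circ_chrom (pet_verts n) (pet_adj n k)
           \<le> (2 * real n * (real k - 1)) / ((real n - 4) * (real k - 2))"
proof -
  have k1: "int (k - 1) = int k - 1" using assms(1) by simp
  obtain E :: int where E: "E = 1 \<or> E = -1" and dv: "(int k - 1) dvd (int n - 2 * E)"
  proof -
    from assms(5) show ?thesis
    proof
      assume "[int n = 2] (mod int (k - 1))"
      hence "(int k - 1) dvd (int n - 2 * 1)" unfolding cong_iff_dvd_diff k1 by simp
      thus ?thesis using that by blast
    next
      assume "[int n = - 2] (mod int (k - 1))"
      hence "(int k - 1) dvd (int n - 2 * (-1))" unfolding cong_iff_dvd_diff k1 by simp
      thus ?thesis using that by blast
    qed
  qed
  have evk: "even (int k)" using assms(2) by simp
  obtain M Q where MQ: "(int k - 1) * M = int n * ((int k - 2) div 2) + E" "Q \<ge> 1"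
    "2 * Q + 1 \<le> int n" "Q \<le> M" "M \<le> int n - Q" "Q \<le> M + E" "M + E \<le> int n - Q"
    "(int n - 4) * (int k - 2) \<le> 2 * (int k - 1) * Q"
  proof -
    have a: "int k \<ge> 4" "int n \<ge> 2 * int k" using assms(1,4) by linarith+
    show ?thesis using key[OF a(1) evk a(2) E dv] that by blast
  qed
  define m where "m = nat M"
  define q where "q = nat Q"
  have mM: "int m = M" and qQ: "int q = Q" using MQ unfolding m_def q_def by auto
  have n0: "n > 0" using assms(1,4) by simp
  have km: "int (k * m) mod int n = (M + E) mod int n"
  proof -
    have "int (k * m) = (int k - 1) * M + M" using mM by (simp add: algebra_simps)
    also have "\<dots> = (M + E) + int n * ((int k - 2) div 2)" using MQ(1) by simp
    finally show ?thesis by simp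
  qed
  have hom: "circ_hom (pet_verts n) (pet_adj n k) n q
     (\<lambda>x. case x of U i \<Rightarrow> (i * m) mod n | V i \<Rightarrow> (i * m + (n - 1) div 2) mod n)"
  proof (rule pet_hom[OF n0 _ _ _ _ _ _ km])
    show "1 \<le> q" using MQ(2) qQ by linarith
    show "2 * q + 1 \<le> n" using MQ(3) qQ by linarith
    show "q \<le> m" using MQ(4) qQ mM by linarith
    show "int m \<le> int n - int q" using MQ(5) qQ mM by linarith
    show "int q \<le> M + E" using MQ(6) qQ by linarith
    show "M + E \<le> int n - int q" using MQ(7) qQ by linarith
  qed
  have mem: "real n / real q \<in> {real p / real q | p q. 2 * q \<le> p \<and> 1 \<le> q \<and>
      (\<exists>f. circ_hom (pet_verts n) (pet_adj n k) p q f)}"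
  proof -
    have "2 * q \<le> n" "1 \<le> q" using MQ(2,3) qQ by linarith+
    thus ?thesis using hom by blast
  qed
  have bdd: "bdd_below {real p / real q | p q. 2 * q \<le> p \<and> 1 \<le> q \<and>
      (\<exists>f. circ_hom (pet_verts n) (pet_adj n k) p q f)}"
    by (rule bdd_belowI[of _ 0]) auto
  have le1: "circ_chrom (pet_verts n) (pet_adj n k) \<le> real n / real q"
    unfolding circ_chrom_def using cInf_lower[OF mem bdd] .
  have ineq: "(real n - 4) * (real k - 2) \<le> 2 * (real k - 1) * real q"
  proof -
    have "real_of_int ((int n - 4) * (int k - 2)) \<le> real_of_int (2 * (int k - 1) * int q)"
      using MQ(8) unfolding qQ by (simp only: of_int_le_iff)
    thus ?thesis by simp
  qed
  have pos: "(real n - 4) * (real k - 2) > 0" using assms(1,4) by simp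
  have q0: "real q > 0" using MQ(2) qQ by simp
  have "real n / real q \<le> (2 * real n * (real k - 1)) / ((real n - 4) * (real k - 2))"
  proof -
    have "real n * ((real n - 4) * (real k - 2)) \<le> real n * (2 * (real k - 1) * real q)"
      using ineq by (simp add: mult_left_mono)
    thus ?thesis using pos q0 by (simp add: divide_simps) (simp add: algebra_simps)
  qed
  thus ?thesis using le1 by linarith
qed

end
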